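(* Let $m$ be a positive integer, let $x,\bar x$ be positive integers and $r,\bar r\in\{0,\dots,m-1\}$. Suppose that for some positive integer $j$ we have $r_n(x,r)=r_n(\bar x,\bar r)$ for all $n\ge j$. Then $r_n(x,r)=r_n(\bar x,\bar r)$ for all $n\ge 0$.
   Context: Fix a positive integer $m$. The triangle $T_m$ is an array whose row $x$ ($x=1,2,\dots$) has $x$ entries, in columns $0,\dots,x-1$. Row $1$ is the single entry $1$. For $x>1$, row $x$ is obtained from row $x-1$ by rotating it cyclically left by $m$ positions (the entry in column $c$ of row $x-1$ moves to column $(c-m)\bmod(x-1)\in\{0,\dots,x-2\}$ of row $x$), then appending in column $x-1$ a new entry equal to $1$ plus the entry in column $0$ of row $x-1$. Entries are individual objects keeping their identity as they move. Tracking: for a positive integer $x$ and $r\in\{0,\dots,m-1\}$, follow the individual entry in row $x$, column $r\bmod x$. Let $(x_0,r_0),(x_1,r_1),\dots$ be the list, in strictly increasing lexicographic order, of all integer pairs $(y,c)$ with $y\ge x$, $0\le c\le m-1$, $(y,c)\ge (x,r)$ lexicographically, such that the tracked entry occupies column $c\bmod y$ of row $y$ (so $x_0=x$, $r_0=r$). Write $x_n(x,r)=x_n$, $r_n(x,r)=r_n$. *)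

theory Defs
  imports Main "HOL-Library.Product_Lexorder" "HOL-Library.Infinite_Set"
begin

text \<open>Column (0-based) occupied, in row x+k of T_m, by the entry that sits in
row x, column r mod x.  Passing from row y (length y) to row y+1, the entry in
column c moves to column (c - m) mod y; the appended entry never moves the
tracked one.\<close>
fun trk :: "nat \<Rightarrow> nat \<Rightarrow> nat \<Rightarrow> nat \<Rightarrow> int" where
  "trk m x r 0 = int (r mod x)"
| "trk m x r (Suc k) = (trk m x r k - int m) mod int (x + k)"

definition trackset :: "nat \<Rightarrow> nat \<Rightarrow> nat \<Rightarrow> (nat \<times> nat) set" where
  "trackset m x r = {(y, c). x \<le> y \<and> c < m \<and> (x, r) \<le> (y, c)
                        \<and> trk m x r (y - x) = int (c mod y)}"

definition xn :: "nat \<Rightarrow> nat \<Rightarrow> nat \<Rightarrow> nat \<Rightarrow> nat" where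
  "xn m x r n = fst (enumerate (trackset m x r) n)"

definition rn :: "nat \<Rightarrow> nat \<Rightarrow> nat \<Rightarrow> nat \<Rightarrow> nat" where
  "rn m x r n = snd (enumerate (trackset m x r) n)"

end

theory Submission
  imports Defs
begin

definition S :: "nat \<Rightarrow> nat \<times> nat \<Rightarrow> nat \<times> nat" where
  "S m p = (fst p + (fst p + snd p) div m, (fst p + snd p) mod m)"

lemma trk_step:
  assumes "0 < y" "x \<le> y" "trk m x r (y-x) = int (c mod y)" "c < m" 
    "Suc k \<le> (y+c) div m"
  shows "trk m x r (y + Suc k - x) = int (y + c - m*Suc k)"
  using assms(5)
proof (induction k)
  case 0
  have mq: "m \<le> y + c" using 0 assms(4)
    by (metis div_less not_le not_one_le_zero One_nat_def)
  have e: "y + Suc 0 - x = Suc (y - x)" using assms(2) by simp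
  have "trk m x r (y + Suc 0 - x) = (int (c mod y) - int m) mod int y"
    unfolding e using assms(2,3) by simp
  also have "\<dots> = (int c - int m) mod int y"
    by (metis mod_diff_left_eq zmod_int)
  also have "\<dots> = (int c + int y - int m) mod int y"
    by (metis add.commute add_diff_eq mod_add_self1)
  also have "\<dots> = int c + int y - int m"
    using mq assms(4) by (intro mod_pos_pos_trivial) auto
  finally show ?case using mq by simp
next
  case (Suc k)
  have mq: "m * Suc (Suc k) \<le> y + c" using Suc.prems
    by (metis dual_order.trans div_times_less_eq_dividend mult.commute mult_le_mono2)
  have e: "y + Suc (Suc k) - x = Suc (y + Suc k - x)" using assms(2) by simp
  have IH: "trk m x r (y + Suc k - x) = int (y + c - m*Suc k)" using Suc by simp
  have "trk m x r (y + Suc (Suc k) - x) = (int (y + c - m*Suc k) - int m) mod int (y + Suc k)"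
    unfolding e using assms(2) IH by simp
  also have "\<dots> = int (y + c - m*Suc (Suc k))"
  proof -
    have a: "int (y + c - m*Suc k) - int m = int (y + c - m*Suc (Suc k))"
      using mq by (simp add: of_nat_diff algebra_simps)
    have "m \<le> m*Suc (Suc k)" by simp
    hence "y + c - m*Suc (Suc k) < y + Suc k" using assms(4) by linarith
    thus ?thesis unfolding a by (metis mod_less zmod_int)
  qed
  finally show ?case .
qed

lemma mod_close:
  fixes c d y :: nat
  assumes "c < d" "d < c + y" "d mod y = c mod y"
  shows False
proof -
  have "y dvd d - c" using assms by (simp add: mod_eq_dvd_iff_nat)
  moreover have "0 < d - c" "d - c < y" using assms by auto
  ultimately show False using nat_dvd_not_less by blast
qed

lemma key:
  assumes "0 < x" "0 < m" "(y,c) \<in> trackset m x r"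
  shows "S m (y,c) \<in> trackset m x r \<and> (y,c) < S m (y,c) \<and>
         (\<forall>s. (y,c) < s \<and> s < S m (y,c) \<longrightarrow> s \<notin> trackset m x r)"
proof -
  have xy: "x \<le> y" and cm: "c < m" and le: "(x,r) \<le> (y,c)"
    and tr: "trk m x r (y-x) = int (c mod y)"
    using assms(3) unfolding trackset_def by auto
  have y0: "0 < y" using xy assms(1) by simp
  show ?thesis
  proof (cases "y + c < m")
    case True
    have Sv: "S m (y,c) = (y, y+c)" using True by (simp add: S_def)
    have mem: "(y, y+c) \<in> trackset m x r"
      using xy True le tr unfolding trackset_def by (auto simp: less_eq_prod_def)
    have btw: "s \<notin> trackset m x r" if "(y,c) < s" "s < (y, y+c)" for s
    proof
      assume sT: "s \<in> trackset m x r"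
      obtain y2 c2 where s: "s = (y2,c2)" by fastforce
      have "y2 = y" "c < c2" "c2 < c + y" using that s by auto
      moreover have "c2 mod y = c mod y" using sT tr s \<open>y2 = y\<close> unfolding trackset_def by auto
      ultimately show False using mod_close by blast
    qed
    show ?thesis using Sv mem btw y0 by auto
  next
    case False
    define q where "q = (y+c) div m"
    define \<rho> where "\<rho> = (y+c) mod m"
    have q1: "1 \<le> q" using False assms(2) unfolding q_def
      by (metis One_nat_def Suc_leI div_greater_zero_iff not_less)
    have Sv: "S m (y,c) = (y+q, \<rho>)" by (simp add: S_def q_def \<rho>_def)
    have qr: "y + c = m*q + \<rho>" unfolding q_def \<rho>_def by simp
    have rm: "\<rho> < m" unfolding \<rho>_def using assms(2) by simp
    have "m \<le> m*q" using q1 by simp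
    hence ry: "\<rho> < y" using qr cm by linarith
    have trq: "trk m x r (y + q - x) = int \<rho>"
      using trk_step[OF y0 xy tr cm, of "q - 1"] q1 qr unfolding q_def[symmetric]
      by simp
    have mem: "(y+q, \<rho>) \<in> trackset m x r"
      using xy rm le trq ry q1 unfolding trackset_def by (auto simp: less_eq_prod_def)
    have btw: "s \<notin> trackset m x r" if h1: "(y,c) < s" and h2: "s < (y+q, \<rho>)" for s
    proof
      assume sT: "s \<in> trackset m x r"
      obtain y2 c2 where s: "s = (y2,c2)" by fastforce
      have c2m: "c2 < m" and tr2: "trk m x r (y2 - x) = int (c2 mod y2)"
        using sT s unfolding trackset_def by auto
      have hh: "(y < y2 \<or> y = y2 \<and> c < c2) \<and> (y2 < y+q \<or> y2 = y+q \<and> c2 < \<rho>)"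
        using h1 h2 s by (simp; linarith)
      consider "y2 = y" "c < c2" | "y < y2" "y2 < y + q" | "y2 = y + q" "c2 < \<rho>"
        using hh q1 by (metis add_less_same_cancel1 less_numeral_extra(3) less_one linorder_neqE_nat not_less_iff_gr_or_eq)
      then show False
      proof cases
        case 1
        then show False using c2m False tr tr2 mod_close[of c c2 y] by auto
      next
        case 2
        then obtain k where k: "y2 = y + Suc k" "Suc k < q"
          by (metis add_Suc_right less_add_Suc2 less_imp_Suc_add add_less_cancel_left)
        have t: "trk m x r (y2 - x) = int (y + c - m * Suc k)"
          using trk_step[OF y0 xy tr cm, of k] k unfolding q_def[symmetric] by simp
        have "m * Suc (Suc k) \<le> m * q" using k by (intro mult_le_mono2) simp
        hence "m \<le> y + c - m * Suc k" using qr by simp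
        moreover have "c2 mod y2 \<le> c2" by simp
        ultimately show False using t tr2 c2m by linarith
      next
        case 3
        have "c2 mod y2 = c2" using 3 ry by simp
        then show False using 3 tr2 trq by simp
      qed
    qed
    show ?thesis using Sv mem btw q1 by auto
  qed
qed

lemma S_inj:
  assumes "0 < m" "c < m" "c' < m" "S m (y,c) = S m (y',c')"
  shows "y = y' \<and> c = c'"
proof -
  define q where "q = (y+c) div m"
  define q' where "q' = (y'+c') div m"
  define \<rho> where "\<rho> = (y+c) mod m"
  have e1: "y + q = y' + q'" and e2: "\<rho> = (y'+c') mod m"
    using assms(4) by (simp_all add: S_def q_def q'_def \<rho>_def)
  have d1: "y + c = m*q + \<rho>" unfolding q_def \<rho>_def by simp
  have d2: "y' + c' = m*q' + \<rho>" unfolding q'_def e2 by simp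
  have "q = q'"
  proof (rule ccontr)
    assume "q \<noteq> q'"
    then consider "q < q'" | "q' < q" by linarith
    then show False
    proof cases
      case 1
      hence "m * Suc q \<le> m * q'" by (intro mult_le_mono2) simp
      hence "m*q + m \<le> m*q'" by simp
      then show False using 1 d1 d2 e1 assms(2,3) by linarith
    next
      case 2
      hence "m * Suc q' \<le> m * q" by (intro mult_le_mono2) simp
      hence "m*q' + m \<le> m*q" by simp
      then show False using 2 d1 d2 e1 assms(2,3) by linarith
    qed
  qed
  then show ?thesis using d1 d2 e1 by simp
qed

definition orb :: "nat \<Rightarrow> nat \<Rightarrow> nat \<Rightarrow> nat \<Rightarrow> nat \<times> nat" where
  "orb m x r n = (S m ^^ n) (x, r)"

lemma orb_Suc: "orb m x r (Suc n) = S m (orb m x r n)"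
  by (simp add: orb_def)

lemma orb_mem:
  assumes "0 < x" "0 < m" "r < m"
  shows "orb m x r n \<in> trackset m x r"
proof (induction n)
  case 0
  then show ?case using assms by (simp add: orb_def trackset_def)
next
  case (Suc n)
  obtain y c where yc: "orb m x r n = (y,c)" by fastforce
  show ?case using key[OF assms(1,2), of y c r] Suc yc by (simp add: orb_Suc)
qed

lemma orb_less:
  assumes "0 < x" "0 < m" "r < m"
  shows "orb m x r n < orb m x r (Suc n)"
proof -
  obtain y c where yc: "orb m x r n = (y,c)" by fastforce
  show ?thesis using key[OF assms(1,2), of y c r] orb_mem[OF assms, of n] yc by (simp add: orb_Suc)
qed

lemma enum_orb:
  assumes "0 < x" "0 < m" "r < m"
  shows "enumerate (trackset m x r) n = orb m x r n"
proof -
  have sm: "strict_mono (orb m x r)"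
    using orb_less[OF assms] by (simp add: strict_mono_Suc_iff)
  have "infinite (range (orb m x r))"
    using sm strict_mono_imp_inj_on range_inj_infinite by blast
  moreover have "range (orb m x r) \<subseteq> trackset m x r" using orb_mem[OF assms] by auto
  ultimately have inf: "infinite (trackset m x r)" using finite_subset by blast
  show ?thesis
  proof (induction n)
    case 0
    have "(LEAST s. s \<in> trackset m x r) = (x, r)"
      by (rule Least_equality) (use orb_mem[OF assms, of 0] in \<open>auto simp: orb_def trackset_def\<close>)
    then show ?case by (simp add: enumerate_0 orb_def)
  next
    case (Suc n)
    obtain y c where yc: "orb m x r n = (y,c)" by fastforce
    have K: "S m (y,c) \<in> trackset m x r \<and> (y,c) < S m (y,c) \<and>
         (\<forall>s. (y,c) < s \<and> s < S m (y,c) \<longrightarrow> s \<notin> trackset m x r)"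
      using key[OF assms(1,2), of y c r] orb_mem[OF assms, of n] yc by simp
    have "(LEAST s. s \<in> trackset m x r \<and> (y,c) < s) = S m (y,c)"
      by (rule Least_equality) (use K in \<open>auto simp: not_less[symmetric]\<close>)
    then show ?case using Suc yc by (simp add: enumerate_Suc''[OF inf] orb_Suc)
  qed
qed

lemma pow_gt: "2 \<le> m \<Longrightarrow> k < (m::nat)^k"
proof -
  assume "2 \<le> m"
  hence "(2::nat)^k \<le> m^k" by (simp add: power_mono)
  moreover have "k < (2::nat)^k" by (rule less_exp)
  ultimately show ?thesis by linarith
qed

theorem mainTheorem2:
  fixes m x xb r rb j :: nat
  assumes "0 < m" and "0 < x" and "0 < xb" and "r < m" and "rb < m" and "0 < j"
    and "\<forall>n\<ge>j. rn m x r n = rn m xb rb n"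
  shows "\<forall>n. rn m x r n = rn m xb rb n"
proof (cases "m = 1")
  case True
  have "\<And>x r n::nat. 0 < x \<Longrightarrow> r < m \<Longrightarrow> rn m x r n = 0"
  proof -
    fix x r n :: nat assume "0 < x" "r < m"
    hence "orb m x r n \<in> trackset m x r" using orb_mem assms(1) by blast
    hence "snd (orb m x r n) < m" by (auto simp: trackset_def)
    moreover have "rn m x r n = snd (orb m x r n)"
      using \<open>0 < x\<close> \<open>r < m\<close> assms(1) by (simp add: rn_def enum_orb)
    ultimately show "rn m x r n = 0" using True by simp
  qed
  then show ?thesis using assms by simp
next
  case False
  hence m2: "2 \<le> m" using assms(1) by simp
  define A where "A = orb m x r"
  define B where "B = orb m xb rb"
  have rnA: "rn m x r n = snd (A n)" for n using assms by (simp add: rn_def enum_orb A_def)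
  have rnB: "rn m xb rb n = snd (B n)" for n using assms by (simp add: rn_def enum_orb B_def)
  have sndeq: "snd (A n) = snd (B n)" if "j \<le> n" for n using assms(7) that rnA rnB by simp
  define d where "d n = int (fst (A n)) - int (fst (B n))" for n
  have rec: "int m * d (Suc n) = int (m+1) * d n" if "j \<le> n" for n
  proof -
    obtain a b where ab: "A n = (a,b)" by fastforce
    obtain a' b' where ab': "B n = (a',b')" by fastforce
    have bb: "b' = b" using sndeq[OF that] ab ab' by simp
    have As: "A (Suc n) = (a + (a+b) div m, (a+b) mod m)"
      using ab by (simp add: A_def orb_Suc S_def)
    have Bs: "B (Suc n) = (a' + (a'+b) div m, (a'+b) mod m)"
      using ab' bb by (simp add: B_def orb_Suc S_def)
    have mm: "(a+b) mod m = (a'+b) mod m" using sndeq[of "Suc n"] that As Bs by simp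
    have e1: "int (a+b) = int m * int ((a+b) div m) + int ((a+b) mod m)"
      by (metis div_mult_mod_eq mult.commute of_nat_add of_nat_mult)
    have e2: "int (a'+b) = int m * int ((a'+b) div m) + int ((a+b) mod m)"
      unfolding mm by (metis div_mult_mod_eq mult.commute of_nat_add of_nat_mult)
    have dn: "d n = int a - int a'" using ab ab' by (simp add: d_def)
    have dS: "d (Suc n) = int a + int ((a+b) div m) - int a' - int ((a'+b) div m)"
      using As Bs by (simp add: d_def)
    define D where "D = int ((a+b) div m) - int ((a'+b) div m)"
    have h1: "d n = int m * D"
      using e1 e2 dn unfolding D_def by (simp add: algebra_simps)
    have h2: "d (Suc n) = d n + D" using dS dn unfolding D_def by simp
    show ?thesis unfolding h2 using h1 by (simp add: algebra_simps)
  qed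
  have pw: "int m ^ k * d (j + k) = int (m+1) ^ k * d j" for k
  proof (induction k)
    case 0 then show ?case by simp
  next
    case (Suc k)
    have "int m ^ Suc k * d (j + Suc k) = int m ^ k * (int m * d (Suc (j + k)))" by simp
    also have "\<dots> = int (m+1) * (int m ^ k * d (j + k))" using rec[of "j+k"] by simp
    also have "\<dots> = int (m+1) ^ Suc k * d j" using Suc by simp
    finally show ?case .
  qed
  have dj: "d j = 0"
  proof (rule ccontr)
    assume nz: "d j \<noteq> 0"
    define k where "k = nat \<bar>d j\<bar>"
    have dv: "int m ^ k dvd int (m+1) ^ k * d j" using pw[of k] by (metis dvd_triv_left)
    have c0: "coprime m (Suc m)" by simp
    have c1: "coprime (int m) (int (m+1))" using c0 coprime_int_iff[of m "m+1"] by (simp only: Suc_eq_plus1)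
    have c2: "coprime (int m ^ k) (int (m+1) ^ k)"
      using c1 by (simp only: coprime_power_left_iff coprime_power_right_iff) simp
    have "int m ^ k dvd d j" using dv c2 by (simp add: coprime_dvd_mult_right_iff)
    hence "int m ^ k dvd \<bar>d j\<bar>" by simp
    hence le: "int m ^ k \<le> \<bar>d j\<bar>" using nz by (intro zdvd_imp_le) auto
    have "k < m ^ k" using pow_gt[OF m2] .
    hence "int k < int m ^ k" by (metis of_nat_less_iff of_nat_power)
    moreover have "int k = \<bar>d j\<bar>" unfolding k_def by simp
    ultimately show False using le by simp
  qed
  have ABj: "A j = B j" using dj sndeq[of j] by (simp add: d_def prod_eq_iff)
  have down: "A (j - k) = B (j - k)" for k
  proof (induction k)
    case 0 then show ?case using ABj by simp
  next
    case (Suc k)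
    show ?case
    proof (cases "Suc k \<le> j")
      case True
      have e: "j - k = Suc (j - Suc k)" using True by simp
      obtain y c where yc: "A (j - Suc k) = (y,c)" by fastforce
      obtain y' c' where yc': "B (j - Suc k) = (y',c')" by fastforce
      have c: "c < m" using orb_mem[OF assms(2,1,4), of "j - Suc k"] yc
        by (simp add: A_def trackset_def)
      have c': "c' < m" using orb_mem[OF assms(3,1,5), of "j - Suc k"] yc'
        by (simp add: B_def trackset_def)
      have "S m (y,c) = S m (y',c')"
        using Suc yc yc' unfolding e by (simp add: A_def B_def orb_Suc)
      then show ?thesis using S_inj[OF assms(1) c c'] yc yc' by simp
    next
      case False
      then show ?thesis using Suc by simp
    qed
  qed
  show ?thesis
  proof
    fix n
    show "rn m x r n = rn m xb rb n"
    proof (cases "j \<le> n")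
      case True then show ?thesis using assms(7) by simp
    next
      case False
      then have "A n = B n" using down[of "j - n"] by simp
      then show ?thesis using rnA rnB by simp
    qed
  qed
qed

end
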